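(* For any topologically reasonable pointclass $\Gamma$, $\Gamma(\mathbb{D})$ implies $\Gamma(\mathbb{C})$; that is, if every set in $\Gamma$ has the Baire property with respect to the dominating topology $\mathcal{D}$ on $\omega^\omega$, then every set in $\Gamma$ has the Baire property with respect to the standard (Baire space, resp. Cantor space) topology.
   Context: For $N\in\omega$ and $f\in\omega^\omega$ put $[N,f]=\{x\in\omega^\omega: f{\restriction}N\subseteq x \text{ and } x(n)\ge f(n)\text{ for all }n\}$. The sets $[N,f]$ form a base of a topology $\mathcal{D}$ on $\omega^\omega$, the dominating topology (it refines the usual Baire space topology). $\mathbb{D}$ (Hechler forcing) is $\omega\times\omega^\omega$ with $(N,f)\le(M,g)$ iff $N\ge M$, $f{\restriction}M=g{\restriction}M$ and $f\ge g$ pointwise; $\mathbb{C}$ is Cohen forcing $\omega^{<\omega}$ (or $2^{<\omega}$) ordered by reverse inclusion. $\Gamma(\mathbb{D})$ means every set in $\Gamma$ (of subsets of $\omega^\omega$) has the Baire property in $\mathcal{D}$; $\Gamma(\mathbb{C})$ means every set in $\Gamma$ has the Baire property in the usual topology of $\omega^\omega$ or $2^\omega$. A pointclass $\Gamma$ is topologically reasonable if it is closed under continuous preimages and $A\cap Q\in\Gamma$ whenever $A\in\Gamma$ and $Q$ is closed. *)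

theory Defs
  imports "HOL-Analysis.Analysis"
begin

type_synonym baire = "nat \<Rightarrow> nat"

definition baire_top :: "baire topology" where
  "baire_top = product_topology (\<lambda>_. discrete_topology (UNIV :: nat set)) UNIV"

definition dom_basic :: "nat \<Rightarrow> baire \<Rightarrow> baire set" where
  "dom_basic N f = {x. (\<forall>n<N. x n = f n) \<and> (\<forall>n. f n \<le> x n)}"

definition dominating_top :: "baire topology" where
  "dominating_top = topology_generated_by {dom_basic N f | N f. True}"

definition nowhere_dense_in :: "'a topology \<Rightarrow> 'a set \<Rightarrow> bool" where
  "nowhere_dense_in X A \<longleftrightarrow> A \<subseteq> topspace X \<and> X interior_of (X closure_of A) = {}"

definition meager_in :: "'a topology \<Rightarrow> 'a set \<Rightarrow> bool" where
  "meager_in X A \<longleftrightarrow> (\<exists>N :: nat \<Rightarrow> 'a set. (\<forall>n. nowhere_dense_in X (N n)) \<and> A \<subseteq> (\<Union>n. N n))"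

definition baire_property_in :: "'a topology \<Rightarrow> 'a set \<Rightarrow> bool" where
  "baire_property_in X A \<longleftrightarrow> (\<exists>U. openin X U \<and> meager_in X ((A - U) \<union> (U - A)))"

definition top_reasonable :: "baire set set \<Rightarrow> bool" where
  "top_reasonable \<Gamma> \<longleftrightarrow>
     (\<forall>A g. A \<in> \<Gamma> \<and> continuous_map baire_top baire_top g \<longrightarrow> g -` A \<in> \<Gamma>) \<and>
     (\<forall>A Q. A \<in> \<Gamma> \<and> closedin baire_top Q \<longrightarrow> A \<inter> Q \<in> \<Gamma>)"

end

theory Submission
  imports Defs "HOL-Library.Nat_Bijection"
begin

definition cyl :: "baire \<Rightarrow> nat \<Rightarrow> baire set" where
  "cyl y m = {z. \<forall>i<m. z i = y i}"

lemma topspace_baire[simp]: "topspace baire_top = UNIV"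
  by (simp add: baire_top_def)

lemma topspace_dom[simp]: "topspace dominating_top = UNIV"
proof -
  have "dom_basic 0 (\<lambda>_. 0) = UNIV" by (auto simp: dom_basic_def)
  then show ?thesis unfolding dominating_top_def topology_generated_by_topspace by blast
qed

lemma openin_cyl: "openin baire_top (cyl y m)"
proof (induction m)
  case 0
  have "cyl y 0 = topspace baire_top" by (simp add: cyl_def)
  then show ?case by (metis openin_topspace)
next
  case (Suc m)
  have c: "continuous_map baire_top (discrete_topology UNIV) (\<lambda>x. x m)"
    unfolding baire_top_def by (rule continuous_map_product_projection) simp
  have "openin baire_top {x \<in> topspace baire_top. x m \<in> {y m}}"
    by (rule openin_continuous_map_preimage[OF c]) simp
  then have o: "openin baire_top {x. x m = y m}" by simp
  have "cyl y (Suc m) = cyl y m \<inter> {x. x m = y m}"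
    by (auto simp: cyl_def less_Suc_eq)
  then show ?case using Suc o by auto
qed

lemma openin_baire_cyl:
  assumes "openin baire_top S" "y \<in> S"
  shows "\<exists>m. cyl y m \<subseteq> S"
proof -
  have "openin (product_topology (\<lambda>_. discrete_topology (UNIV::nat set)) UNIV) S"
    using assms(1) unfolding baire_top_def .
  then have "\<exists>U. finite {i \<in> UNIV. U i \<noteq> topspace (discrete_topology (UNIV::nat set))} \<and>
     (\<forall>i \<in> UNIV. openin (discrete_topology UNIV) (U i)) \<and> y \<in> Pi\<^sub>E UNIV U \<and> Pi\<^sub>E UNIV U \<subseteq> S"
    using assms(2) unfolding openin_product_topology_alt by blast
  then obtain U where U0: "finite {i \<in> UNIV. U i \<noteq> topspace (discrete_topology (UNIV::nat set))}"
     and U: "y \<in> Pi\<^sub>E UNIV U" "Pi\<^sub>E UNIV U \<subseteq> S"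
    by blast
  have eq: "{i \<in> UNIV. U i \<noteq> topspace (discrete_topology (UNIV::nat set))} = {i. U i \<noteq> UNIV}"
    by simp
  have U1: "finite {i. U i \<noteq> UNIV}" using U0 unfolding eq .
  obtain m where m0: "{i. U i \<noteq> UNIV} \<subseteq> {..<m}"
    using finite_nat_bounded[OF U1] by (elim exE) (rule that)
  have m: "\<forall>i\<in>{i. U i \<noteq> UNIV}. i < m" using m0 by auto
  have "cyl y m \<subseteq> Pi\<^sub>E UNIV U"
  proof
    fix z assume z: "z \<in> cyl y m"
    show "z \<in> Pi\<^sub>E UNIV U"
    proof (simp add: PiE_def Pi_def, intro allI)
      fix i show "z i \<in> U i"
      proof (cases "i < m")
        case True then show ?thesis using z U(1) by (auto simp: cyl_def PiE_def Pi_def)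
      next
        case False then show ?thesis using m by auto
      qed
    qed
  qed
  then show ?thesis using U(2) by blast
qed

lemma nowhere_dense_baire_crit:
  assumes "\<And>y L. \<exists>y' m. (\<forall>i<L. y' i = y i) \<and> cyl y' m \<inter> A = {}"
  shows "nowhere_dense_in baire_top A"
  unfolding nowhere_dense_in_def
proof (intro conjI)
  show "A \<subseteq> topspace baire_top" by simp
  show "baire_top interior_of (baire_top closure_of A) = {}"
  proof (rule ccontr)
    assume "baire_top interior_of (baire_top closure_of A) \<noteq> {}"
    then obtain z where z: "z \<in> baire_top interior_of (baire_top closure_of A)" by blast
    then obtain L where L: "cyl z L \<subseteq> baire_top interior_of (baire_top closure_of A)"
      using openin_baire_cyl openin_interior_of by blast
    obtain y' m where y': "\<forall>i<L. y' i = z i" "cyl y' m \<inter> A = {}" using assms by blast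
    have sub: "cyl y' (max m L) \<subseteq> cyl y' m \<inter> cyl z L" using y'(1) by (auto simp: cyl_def)
    have "cyl y' (max m L) \<inter> A = {}" using sub y'(2) by blast
    then have "cyl y' (max m L) \<inter> baire_top closure_of A = {}"
      by (rule iffD2[OF openin_Int_closure_of_eq_empty[OF openin_cyl]])
    moreover have "cyl y' (max m L) \<subseteq> baire_top closure_of A"
      using sub L interior_of_subset[of baire_top "baire_top closure_of A"] by (meson le_infE subset_trans)
    moreover have "y' \<in> cyl y' (max m L)" by (simp add: cyl_def)
    ultimately show False by blast
  qed
qed

definition B :: "nat \<times> baire \<Rightarrow> baire set" where
  "B p = dom_basic (fst p) (snd p)"

definition le :: "nat \<times> baire \<Rightarrow> nat \<times> baire \<Rightarrow> bool" where
  "le q p \<longleftrightarrow> fst p \<le> fst q \<and> (\<forall>n<fst p. snd q n = snd p n) \<and> (\<forall>n. snd p n \<le> snd q n)"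

lemma le_refl: "le p p" by (simp add: le_def)
lemma le_trans: "le r q \<Longrightarrow> le q p \<Longrightarrow> le r p"
  unfolding le_def by (metis order_trans less_le_trans)
lemma le_B: "le q p \<Longrightarrow> B q \<subseteq> B p"
  unfolding le_def B_def dom_basic_def by (auto intro: order_trans)
lemma in_B_self: "snd p \<in> B p" by (simp add: B_def dom_basic_def)

lemma inter_basic:
  assumes "z \<in> B (N,f)" "z \<in> B (N',f')"
  defines "q \<equiv> (max N N', \<lambda>i. if i < max N N' then z i else max (f i) (f' i))"
  shows "le q (N,f)" "z \<in> B q" "B q \<subseteq> B (N',f')"
  using assms unfolding le_def B_def dom_basic_def q_def
  by (auto simp: less_max_iff_disj) (metis max.bounded_iff max.cobounded1 max.cobounded2 order_trans nle_le less_max_iff_disj)+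

lemma openin_dom_basic: "openin dominating_top (B p)"
  unfolding dominating_top_def openin_topology_generated_by_iff B_def
  by (rule generate_topology_on.Basis) blast

lemma openin_dom_local:
  assumes "openin dominating_top U" "x \<in> U"
  shows "\<exists>p. x \<in> B p \<and> B p \<subseteq> U"
proof -
  have "generate_topology_on {dom_basic N f | N f. True} U"
    using assms(1) unfolding dominating_top_def openin_topology_generated_by_iff .
  then show ?thesis using assms(2)
  proof (induction arbitrary: x)
    case Empty then show ?case by simp
  next
    case (Int a b)
    have xa: "x \<in> a" and xb: "x \<in> b" using Int.prems by auto
    obtain p1 where p1: "x \<in> B p1" "B p1 \<subseteq> a" using Int.IH(1)[OF xa] by blast
    obtain p2 where p2: "x \<in> B p2" "B p2 \<subseteq> b" using Int.IH(2)[OF xb] by blast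
    define q where "q = (max (fst p1) (fst p2), \<lambda>i. if i < max (fst p1) (fst p2) then x i else max (snd p1 i) (snd p2 i))"
    have p1': "x \<in> B (fst p1, snd p1)" and p2': "x \<in> B (fst p2, snd p2)" using p1 p2 by simp_all
    have q: "le q (fst p1, snd p1)" "x \<in> B q" "B q \<subseteq> B (fst p2, snd p2)"
      using inter_basic[OF p1' p2'] unfolding q_def by blast+
    have "B q \<subseteq> B p1" using le_B[OF q(1)] by simp
    moreover have "B q \<subseteq> B p2" using q(3) by simp
    ultimately have "B q \<subseteq> a \<inter> b" using p1(2) p2(2) by blast
    then show ?case using q(2) by blast
  next
    case (UN K) then show ?case by blast
  next
    case (Basis s) then show ?case unfolding B_def by force
  qed
qed

lemma nowhere_dense_avoid:
  assumes "nowhere_dense_in dominating_top E"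
  shows "\<exists>q. le q p \<and> B q \<inter> E = {}"
proof -
  have "\<not> B p \<subseteq> dominating_top closure_of E"
  proof
    assume "B p \<subseteq> dominating_top closure_of E"
    then have "B p \<subseteq> dominating_top interior_of (dominating_top closure_of E)"
      by (rule interior_of_maximal[OF _ openin_dom_basic])
    then show False using assms in_B_self[of p] unfolding nowhere_dense_in_def by blast
  qed
  then obtain z where z: "z \<in> B p" "z \<notin> dominating_top closure_of E" by blast
  have "openin dominating_top (B p - dominating_top closure_of E)"
    by (intro openin_diff openin_dom_basic closedin_closure_of)
  then obtain p' where p': "z \<in> B p'" "B p' \<subseteq> B p - dominating_top closure_of E"
    using openin_dom_local z by blast
  have E: "E \<subseteq> dominating_top closure_of E"
    by (rule closure_of_subset) simp
  define q where "q = (max (fst p) (fst p'), \<lambda>i. if i < max (fst p) (fst p') then z i else max (snd p i) (snd p' i))"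
  have "le q p" "B q \<subseteq> B p'"
    using inter_basic[of z "fst p" "snd p" "fst p'" "snd p'"] z p' unfolding q_def by auto
  then show ?thesis using p' E by blast
qed


definition hh :: "nat \<Rightarrow> nat" where "hh d = fst (prod_decode d)"
definition enc :: "nat \<Rightarrow> nat \<Rightarrow> nat" where "enc a b = prod_encode (a, b)"
definition gmap :: "baire \<Rightarrow> baire" where "gmap x = (\<lambda>i. hh (x i))"

lemma hh_enc[simp]: "hh (enc a b) = a" by (simp add: hh_def enc_def)
lemma enc_ge: "b \<le> enc a b" by (simp add: enc_def le_prod_encode_2)

definition agree :: "nat \<times> baire \<Rightarrow> baire \<Rightarrow> bool" where
  "agree p y \<longleftrightarrow> (\<forall>i<fst p. hh (snd p i) = y i)"

definition compat :: "nat \<times> baire \<Rightarrow> baire \<Rightarrow> nat \<Rightarrow> bool" where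
  "compat p y m \<longleftrightarrow> (\<forall>i<min (fst p) m. hh (snd p i) = y i)"

definition avoid :: "(nat \<Rightarrow> baire set) \<Rightarrow> nat \<Rightarrow> nat \<times> baire \<Rightarrow> nat \<times> baire" where
  "avoid E k p = (SOME q. le q p \<and> B q \<inter> E k = {})"

definition ext :: "(nat \<Rightarrow> baire set) \<Rightarrow> nat \<Rightarrow> nat \<times> baire \<Rightarrow> baire \<Rightarrow> nat \<Rightarrow> nat \<times> baire" where
  "ext E k p y m = (let q0 = avoid E k (max (fst p) m, \<lambda>i. if fst p \<le> i \<and> i < m then enc (y i) (snd p i) else snd p i)
     in (Suc (fst q0), snd q0))"

primrec st :: "(nat \<Rightarrow> baire set) \<Rightarrow> nat \<times> baire \<Rightarrow> baire \<Rightarrow> nat \<Rightarrow> (nat \<times> baire) \<times> nat \<times> (nat \<times> baire)" where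
  "st E W y 0 = (W, 0, ext E 0 W y 0)"
| "st E W y (Suc n) = (case st E W y n of (p, k, q) \<Rightarrow>
     if compat q y (Suc n) then
       (if fst q \<le> Suc n then (q, Suc k, ext E (Suc k) q y (Suc n)) else (p, k, q))
     else (p, k, ext E k p y (Suc n)))"

lemma ext_local:
  assumes "\<forall>i<m. y i = z i"
  shows "ext E k p y m = ext E k p z m"
proof -
  have "(\<lambda>i. if fst p \<le> i \<and> i < m then enc (y i) (snd p i) else snd p i)
      = (\<lambda>i. if fst p \<le> i \<and> i < m then enc (z i) (snd p i) else snd p i)"
    using assms by auto
  then show ?thesis unfolding ext_def by simp
qed

lemma compat_local:
  assumes "\<forall>i<m. y i = z i"
  shows "compat q y m = compat q z m"
  using assms unfolding compat_def by auto

lemma st_local: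
  assumes "\<forall>i<n. y i = z i"
  shows "st E W y n = st E W z n"
  using assms
proof (induction n)
  case 0
  have "ext E 0 W y 0 = ext E 0 W z 0" by (rule ext_local) simp
  then show ?case by simp
next
  case (Suc n)
  then have IH: "st E W y n = st E W z n" by simp
  have c: "\<And>q. compat q y (Suc n) = compat q z (Suc n)"
    using compat_local Suc.prems by blast
  have e: "\<And>k q. ext E k q y (Suc n) = ext E k q z (Suc n)"
    using ext_local Suc.prems by blast
  show ?case using IH c e by (simp split: prod.split)
qed

lemma gmap_B: "gmap ` B p = {y. agree p y}"
proof
  show "gmap ` B p \<subseteq> {y. agree p y}"
    by (auto simp: gmap_def agree_def B_def dom_basic_def)
  show "{y. agree p y} \<subseteq> gmap ` B p"
  proof
    fix y assume y: "y \<in> {y. agree p y}"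
    define x where "x = (\<lambda>i. if i < fst p then snd p i else enc (y i) (snd p i))"
    have "x \<in> B p" by (auto simp: x_def B_def dom_basic_def enc_ge)
    moreover have "gmap x = y" using y by (auto simp: gmap_def x_def agree_def)
    ultimately show "y \<in> gmap ` B p" by blast
  qed
qed

context
  fixes E :: "nat \<Rightarrow> baire set" and W :: "nat \<times> baire"
  assumes av: "\<And>k p. \<exists>q. le q p \<and> B q \<inter> E k = {}"
begin

lemma avoid_spec: "le (avoid E k p) p" "B (avoid E k p) \<inter> E k = {}"
  using someI_ex[OF av[of p k]] unfolding avoid_def by auto

lemma ext_spec:
  assumes "compat p y m"
  shows "le (ext E k p y m) p" "B (ext E k p y m) \<inter> E k = {}" "m < fst (ext E k p y m)"
    "\<forall>i<m. hh (snd (ext E k p y m) i) = y i"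
proof -
  define p1 where "p1 = (max (fst p) m, \<lambda>i. if fst p \<le> i \<and> i < m then enc (y i) (snd p i) else snd p i)"
  define q0 where "q0 = avoid E k p1"
  have e: "ext E k p y m = (Suc (fst q0), snd q0)" unfolding ext_def q0_def p1_def Let_def by simp
  have lp1: "le p1 p" unfolding le_def p1_def by (auto simp: enc_ge)
  have lq0: "le q0 p1" "B q0 \<inter> E k = {}" using avoid_spec q0_def by auto
  have lq: "le (Suc (fst q0), snd q0) q0" unfolding le_def by auto
  show "le (ext E k p y m) p" unfolding e using lq lq0 lp1 le_trans by blast
  show "B (ext E k p y m) \<inter> E k = {}" unfolding e using le_B[OF lq] lq0 by blast
  show "m < fst (ext E k p y m)" unfolding e using lq0 unfolding le_def p1_def by auto
  show "\<forall>i<m. hh (snd (ext E k p y m) i) = y i"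
  proof (intro allI impI)
    fix i assume i: "i < m"
    have "snd q0 i = snd p1 i" using lq0(1) i unfolding le_def p1_def by auto
    then show "hh (snd (ext E k p y m) i) = y i"
      using i assms unfolding e p1_def compat_def by (auto simp: min_def split: if_splits)
  qed
qed

lemma st_inv:
  assumes "agree W y" "st E W y n = (p, k, q)"
  shows "le p W \<and> agree p y \<and> le q p \<and> B q \<inter> E k = {} \<and> n < fst q \<and> (\<forall>i<n. hh (snd q i) = y i)
     \<and> (\<forall>j<k. B p \<inter> E j = {}) \<and> k \<le> n \<and> k \<le> fst p"
  using assms(2)
proof (induction n arbitrary: p k q)
  case 0
  have c: "compat W y 0" by (simp add: compat_def)
  show ?case using 0 ext_spec[OF c] assms(1) by (auto simp: le_refl)
next
  case (Suc n)
  obtain p0 k0 q0 where s: "st E W y n = (p0, k0, q0)" by (metis prod.exhaust)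
  note IH = Suc.IH[OF s]
  show ?case
  proof (cases "compat q0 y (Suc n)")
    case c: True
    show ?thesis
    proof (cases "fst q0 \<le> Suc n")
      case True
      then have eq: "p = q0" "k = Suc k0" "q = ext E (Suc k0) q0 y (Suc n)"
        using Suc.prems s c by auto
      have ag: "agree q0 y" using c True unfolding compat_def agree_def by auto
      have fq: "fst q0 = Suc n" using True IH by auto
      have sub: "B q0 \<subseteq> B p0" using IH le_B by blast
      have "\<forall>j<Suc k0. B q0 \<inter> E j = {}"
      proof (intro allI impI)
        fix j assume j: "j < Suc k0"
        show "B q0 \<inter> E j = {}"
        proof (cases "j = k0")
          case True then show ?thesis using IH by simp
        next
          case False
          then have "B p0 \<inter> E j = {}" using IH j by simp
          then show ?thesis using sub by blast
        qed
      qed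
      moreover have "le q0 W" using le_trans[of q0 p0 W] IH by blast
      ultimately show ?thesis unfolding eq using ext_spec[OF c, of "Suc k0"] IH ag fq by auto
    next
      case False
      then have eq: "p = p0" "k = k0" "q = q0" using Suc.prems s c by auto
      show ?thesis unfolding eq using IH c False unfolding compat_def by auto
    qed
  next
    case False
    then have eq: "p = p0" "k = k0" "q = ext E k0 p0 y (Suc n)" using Suc.prems s by auto
    have c: "compat p0 y (Suc n)" using IH unfolding agree_def compat_def by auto
    show ?thesis unfolding eq using ext_spec[OF c, of k0] IH by auto
  qed
qed

lemma st_mono1:
  assumes "agree W y"
  shows "le (fst (st E W y (Suc n))) (fst (st E W y n)) \<and> fst (snd (st E W y n)) \<le> fst (snd (st E W y (Suc n)))"
proof -
  obtain p0 k0 q0 where s: "st E W y n = (p0, k0, q0)" by (metis prod.exhaust)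
  have "le q0 p0" using st_inv[OF assms s] by auto
  then show ?thesis using s by (auto simp: le_refl)
qed

lemma st_mono:
  assumes "agree W y" "n \<le> m"
  shows "le (fst (st E W y m)) (fst (st E W y n)) \<and> fst (snd (st E W y n)) \<le> fst (snd (st E W y m))"
  using assms(2)
proof (induction m)
  case 0 then show ?case by (simp add: le_refl)
next
  case (Suc m)
  show ?case
  proof (cases "n = Suc m")
    case True then show ?thesis by (simp add: le_refl)
  next
    case False
    then have "n \<le> m" using Suc.prems by simp
    then show ?thesis using Suc.IH st_mono1[OF assms(1), of m] le_trans order_trans by blast
  qed
qed

end


lemma limit_point:
  fixes c :: "nat \<Rightarrow> nat \<times> baire"
  assumes ch: "\<And>n m. n \<le> m \<Longrightarrow> le (c m) (c n)" and ub: "\<And>i. \<exists>n. i < fst (c n)"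
  shows "\<exists>x. \<forall>n. x \<in> B (c n) \<and> (\<forall>i<fst (c n). x i = snd (c n) i)"
proof -
  define s where "s i = (SOME n. i < fst (c n))" for i
  have s: "i < fst (c (s i))" for i using someI_ex[OF ub[of i]] s_def by simp
  define x where "x i = snd (c (s i)) i" for i
  have key: "(i < fst (c n) \<longrightarrow> x i = snd (c n) i) \<and> snd (c n) i \<le> x i" for n i
  proof (cases "n \<le> s i")
    case True
    then have "le (c (s i)) (c n)" by (rule ch)
    then show ?thesis unfolding le_def x_def by auto
  next
    case False
    then have "le (c n) (c (s i))" using ch by simp
    then show ?thesis unfolding le_def x_def using s[of i] by auto
  qed
  show ?thesis
    by (rule exI[of _ x]) (use key in \<open>auto simp: B_def dom_basic_def\<close>)
qed

context
  fixes E :: "nat \<Rightarrow> baire set" and W :: "nat \<times> baire"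
  assumes av: "\<And>k p. \<exists>q. le q p \<and> B q \<inter> E k = {}"
begin

lemma dens:
  "\<forall>y. agree W y \<longrightarrow> (\<forall>L. \<exists>y' m. (\<forall>i<L. y' i = y i) \<and> agree W y' \<and>
      (\<forall>z\<in>cyl y' m. \<exists>n. K \<le> fst (snd (st E W z n))))"
proof (induction K)
  case 0
  then show ?case by blast
next
  case (Suc K)
  show ?case
  proof (intro allI impI)
    fix y L assume ay: "agree W y"
    obtain y1 m1 where y1: "\<forall>i<L. y1 i = y i" "agree W y1"
      "\<forall>z\<in>cyl y1 m1. \<exists>n. K \<le> fst (snd (st E W z n))"
      using Suc.IH ay by blast
    obtain n1 where n1: "K \<le> fst (snd (st E W y1 n1))" using y1(3) by (auto simp: cyl_def)
    define n where "n = max n1 (max m1 (max L (fst W)))"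
    have "K \<le> fst (snd (st E W y1 n))"
      using n1 st_mono[of E W, OF av y1(2), of n1 n] unfolding n_def by auto
    obtain p k q where s: "st E W y1 n = (p, k, q)" by (metis prod.exhaust)
    have Kk: "K \<le> k" using \<open>K \<le> fst (snd (st E W y1 n))\<close> s by simp
    have inv: "n < fst q" "\<forall>i<n. hh (snd q i) = y1 i"
      using st_inv[of E W, OF av y1(2) s] by auto
    define y2 where "y2 i = (if i < n then y1 i else hh (snd q i))" for i
    have s2: "st E W y2 n = (p, k, q)"
      using s st_local[of n y2 y1 E W] unfolding y2_def by auto
    have hq: "\<forall>i<fst q. hh (snd q i) = y2 i" using inv unfolding y2_def by auto
    have claim: "n + d < fst q \<longrightarrow> st E W y2 (n + d) = (p, k, q)" for d
    proof (induction d)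
      case 0 then show ?case using s2 by simp
    next
      case (Suc d)
      show ?case
      proof
        assume lt: "n + Suc d < fst q"
        have c: "compat q y2 (Suc (n + d))" using hq unfolding compat_def by auto
        show "st E W y2 (n + Suc d) = (p, k, q)"
          using Suc lt c by simp
      qed
    qed
    define d0 where "d0 = fst q - Suc n"
    have d0: "n + d0 < fst q" "Suc (n + d0) = fst q" using inv unfolding d0_def by auto
    have c: "compat q y2 (Suc (n + d0))" using hq unfolding compat_def by auto
    have sd: "st E W y2 (n + d0) = (p, k, q)" using claim[of d0] d0(1) by blast
    have "st E W y2 (Suc (n + d0)) = (q, Suc k, ext E (Suc k) q y2 (Suc (n + d0)))"
    proof -
      have lq: "fst q \<le> Suc (n + d0)" using d0(2) by simp
      show ?thesis by (simp only: st.simps(2) sd case_prod_conv if_P[OF c] if_P[OF lq])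
    qed
    then have "st E W y2 (fst q) = (q, Suc k, ext E (Suc k) q y2 (Suc (n + d0)))"
      unfolding d0(2) .
    then have sfq: "fst (snd (st E W y2 (fst q))) = Suc k" by simp
    show "\<exists>y' m. (\<forall>i<L. y' i = y i) \<and> agree W y' \<and> (\<forall>z\<in>cyl y' m. \<exists>n. Suc K \<le> fst (snd (st E W z n)))"
    proof (intro exI conjI)
      show "\<forall>i<L. y2 i = y i" using y1(1) unfolding y2_def n_def by auto
      show "agree W y2" using y1(2) unfolding agree_def y2_def n_def by auto
      show "\<forall>z\<in>cyl y2 (fst q). \<exists>n. Suc K \<le> fst (snd (st E W z n))"
      proof
        fix z assume "z \<in> cyl y2 (fst q)"
        then have "st E W z (fst q) = st E W y2 (fst q)"
          by (intro st_local) (auto simp: cyl_def)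
        then show "\<exists>n. Suc K \<le> fst (snd (st E W z n))" using sfq Kk by (intro exI[of _ "fst q"]) simp
      qed
    qed
  qed
qed

lemma build_point:
  assumes ay: "agree W y" and unb: "\<forall>K. \<exists>n. K \<le> fst (snd (st E W y n))"
  shows "\<exists>x. x \<in> B W \<and> gmap x = y \<and> (\<forall>j. x \<notin> E j)"
proof -
  define c where "c n = fst (st E W y n)" for n
  have ch: "le (c m) (c n)" if "n \<le> m" for n m
    unfolding c_def using conjunct1[OF st_mono[of E W, OF av ay that]] .
  have invn: "le (c n) W \<and> agree (c n) y \<and> (\<forall>j<fst (snd (st E W y n)). B (c n) \<inter> E j = {}) \<and>
      fst (snd (st E W y n)) \<le> fst (c n)" for n
    using st_inv[of E W, OF av ay, of n "fst (st E W y n)" "fst (snd (st E W y n))" "snd (snd (st E W y n))"]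
    unfolding c_def by simp
  have ub: "\<exists>n. i < fst (c n)" for i
  proof -
    obtain n where "Suc i \<le> fst (snd (st E W y n))" using unb by blast
    then show ?thesis using invn[of n] by (intro exI[of _ n]) simp
  qed
  obtain x where x: "\<forall>n. x \<in> B (c n) \<and> (\<forall>i<fst (c n). x i = snd (c n) i)"
    using limit_point[of c, OF ch ub] by blast
  show ?thesis
  proof (intro exI conjI allI)
    show "x \<in> B W" using x le_B invn by blast
    show "gmap x = y"
    proof
      fix i
      obtain n where "i < fst (c n)" using ub by blast
      then show "gmap x i = y i" using x invn[of n] unfolding gmap_def agree_def by auto
    qed
    fix j
    obtain n where "Suc j \<le> fst (snd (st E W y n))" using unb by blast
    then have "B (c n) \<inter> E j = {}" using invn[of n] by simp
    moreover have "x \<in> B (c n)" using x by blast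
    ultimately show "x \<notin> E j" by blast
  qed
qed

lemma KL:
  assumes "gmap -` M \<inter> B W \<subseteq> (\<Union>n. E n)"
  shows "meager_in baire_top (M \<inter> {y. agree W y})"
proof -
  define N where "N K = {y. agree W y} - {y. \<exists>n. K \<le> fst (snd (st E W y n))}" for K
  have nd: "nowhere_dense_in baire_top (N K)" for K
  proof (rule nowhere_dense_baire_crit)
    fix y L
    show "\<exists>y' m. (\<forall>i<L. y' i = y i) \<and> cyl y' m \<inter> N K = {}"
    proof (cases "agree W y")
      case True
      then obtain y' m where "(\<forall>i<L. y' i = y i)" "\<forall>z\<in>cyl y' m. \<exists>n. K \<le> fst (snd (st E W z n))"
        using dens by blast
      then show ?thesis unfolding N_def by blast
    next
      case False
      then have "cyl y (fst W) \<inter> N K = {}" unfolding N_def agree_def cyl_def by auto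
      then show ?thesis by blast
    qed
  qed
  have "M \<inter> {y. agree W y} \<subseteq> (\<Union>K. N K)"
  proof
    fix y assume y: "y \<in> M \<inter> {y. agree W y}"
    show "y \<in> (\<Union>K. N K)"
    proof (rule ccontr)
      assume "y \<notin> (\<Union>K. N K)"
      then have "\<forall>K. \<exists>n. K \<le> fst (snd (st E W y n))" using y unfolding N_def by auto
      then obtain x where "x \<in> B W" "gmap x = y" "\<forall>j. x \<notin> E j" using build_point y by blast
      then show False using assms y by blast
    qed
  qed
  then show ?thesis unfolding meager_in_def using nd by blast
qed

end


lemma meager_mono: "meager_in X A \<Longrightarrow> C \<subseteq> A \<Longrightarrow> meager_in X C"
  unfolding meager_in_def by blast

lemma nowhere_dense_empty: "nowhere_dense_in X {}"
  by (simp add: nowhere_dense_in_def)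

lemma meager_UN:
  fixes S :: "'i::countable \<Rightarrow> 'a set"
  assumes "\<And>l. meager_in X (S l)"
  shows "meager_in X (\<Union>l. S l)"
proof -
  have ex: "\<forall>l. \<exists>N::nat \<Rightarrow> 'a set. (\<forall>n. nowhere_dense_in X (N n)) \<and> S l \<subseteq> (\<Union>n. N n)"
  proof
    fix l show "\<exists>N::nat \<Rightarrow> 'a set. (\<forall>n. nowhere_dense_in X (N n)) \<and> S l \<subseteq> (\<Union>n. N n)"
      using assms[of l] unfolding meager_in_def .
  qed
  obtain NN :: "'i \<Rightarrow> nat \<Rightarrow> 'a set" where NN0: "\<forall>l. (\<forall>n. nowhere_dense_in X (NN l n)) \<and> S l \<subseteq> (\<Union>n. NN l n)"
    using choice[OF ex] by (elim exE) (rule that)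
  have NN: "\<And>l n. nowhere_dense_in X (NN l n)" "\<And>l. S l \<subseteq> (\<Union>n. NN l n)"
    using NN0 by simp_all
  define N where "N k = (case from_nat k of (l, n) \<Rightarrow> NN l n)" for k
  have "nowhere_dense_in X (N k)" for k unfolding N_def using NN(1) by (simp split: prod.split)
  moreover have "(\<Union>l. S l) \<subseteq> (\<Union>k. N k)"
  proof
    fix y assume "y \<in> (\<Union>l. S l)"
    then obtain l n where "y \<in> NN l n" using NN(2) by blast
    then have "y \<in> N (to_nat (l, n))" unfolding N_def by simp
    then show "y \<in> (\<Union>k. N k)" by blast
  qed
  ultimately show ?thesis unfolding meager_in_def by blast
qed

lemma meager_Un:
  assumes "meager_in X A" "meager_in X C"
  shows "meager_in X (A \<union> C)"
proof -
  have "A \<union> C = (\<Union>b. if b then A else C)" by auto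
  then show ?thesis using meager_UN[of X "\<lambda>b::bool. if b then A else C"] assms by simp
qed

lemma gmap_cont: "continuous_map baire_top baire_top gmap"
  unfolding baire_top_def continuous_map_componentwise_UNIV
proof
  fix k :: nat
  have "continuous_map (product_topology (\<lambda>_. discrete_topology (UNIV::nat set)) UNIV)
          (discrete_topology UNIV) (hh \<circ> (\<lambda>x. x k))"
    by (rule continuous_map_compose[OF continuous_map_product_projection]) auto
  then show "continuous_map (product_topology (\<lambda>_. discrete_topology UNIV) UNIV)
          (discrete_topology UNIV) (\<lambda>x. gmap x k)"
    by (simp add: gmap_def o_def)
qed

definition Cl :: "nat list \<Rightarrow> baire set" where
  "Cl l = {y. \<forall>i<length l. y i = l ! i}"

lemma agree_Cl: "{y. agree p y} = Cl (map (\<lambda>i. hh (snd p i)) [0..<fst p])"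
  unfolding Cl_def agree_def by auto

lemma agree_open: "openin baire_top {y. agree p y}"
proof -
  have "{y. agree p y} = cyl (\<lambda>i. hh (snd p i)) (fst p)" unfolding cyl_def agree_def by auto
  then show ?thesis using openin_cyl by simp
qed

theorem theorem3p1:
  fixes \<Gamma> :: "baire set set"
  assumes "top_reasonable \<Gamma>"
    and "\<forall>A\<in>\<Gamma>. baire_property_in dominating_top A"
  shows "\<forall>A\<in>\<Gamma>. baire_property_in baire_top A"
proof
  fix A assume A: "A \<in> \<Gamma>"
  have "gmap -` A \<in> \<Gamma>" using assms(1) A gmap_cont unfolding top_reasonable_def by blast
  then obtain U where U: "openin dominating_top U"
    "meager_in dominating_top ((gmap -` A - U) \<union> (U - gmap -` A))"
    using assms(2) unfolding baire_property_in_def by blast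
  then obtain E :: "nat \<Rightarrow> baire set" where E: "\<And>n. nowhere_dense_in dominating_top (E n)"
    "(gmap -` A - U) \<union> (U - gmap -` A) \<subseteq> (\<Union>n. E n)"
    unfolding meager_in_def by blast
  have av: "\<And>k p. \<exists>q. le q p \<and> B q \<inter> E k = {}" using nowhere_dense_avoid E(1) by blast
  define V where "V = gmap ` U"
  have oV: "openin baire_top V"
    unfolding openin_subopen[of baire_top V]
  proof
    fix y assume "y \<in> V"
    then obtain x where x: "x \<in> U" "y = gmap x" unfolding V_def by blast
    then obtain p where p: "x \<in> B p" "B p \<subseteq> U" using openin_dom_local U(1) by blast
    have "y \<in> {y. agree p y}" "{y. agree p y} \<subseteq> V"
      using x p gmap_B[of p] unfolding V_def by blast+
    then show "\<exists>T. openin baire_top T \<and> y \<in> T \<and> T \<subseteq> V" using agree_open by blast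
  qed
  define W0 where "W0 = (0::nat, \<lambda>_::nat. 0::nat)"
  have m1: "meager_in baire_top (A - V)"
  proof -
    have "gmap -` (A - V) \<inter> B W0 \<subseteq> (\<Union>n. E n)" using E(2) unfolding V_def by blast
    from KL[OF av this] show ?thesis unfolding W0_def agree_def by simp
  qed
  define S where "S l = (if \<exists>p. B p \<subseteq> U \<and> {y. agree p y} = Cl l then Cl l - A else {})" for l
  have mS: "meager_in baire_top (S l)" for l
  proof (cases "\<exists>p. B p \<subseteq> U \<and> {y. agree p y} = Cl l")
    case True
    then obtain p where p: "B p \<subseteq> U" "{y. agree p y} = Cl l" by blast
    have "gmap -` (Cl l - A) \<inter> B p \<subseteq> (\<Union>n. E n)" using E(2) p by blast
    from KL[OF av this] have "meager_in baire_top ((Cl l - A) \<inter> {y. agree p y})" .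
    then show ?thesis using True p unfolding S_def by (simp add: Int_absorb2 Diff_subset)
  next
    case False
    then have "S l = {}" unfolding S_def by (rule if_not_P)
    then show ?thesis unfolding meager_in_def
      by (intro exI[of _ "\<lambda>_::nat. {}"]) (simp add: nowhere_dense_empty)
  qed
  have "V - A \<subseteq> (\<Union>l. S l)"
  proof
    fix y assume y: "y \<in> V - A"
    then obtain x where x: "x \<in> U" "y = gmap x" unfolding V_def by blast
    then obtain p where p: "x \<in> B p" "B p \<subseteq> U" using openin_dom_local U(1) by blast
    define l where "l = map (\<lambda>i. hh (snd p i)) [0..<fst p]"
    have "y \<in> Cl l" using x p gmap_B[of p] agree_Cl[of p] unfolding l_def by blast
    moreover have "\<exists>p. B p \<subseteq> U \<and> {y. agree p y} = Cl l"
      using p(2) agree_Cl[of p] unfolding l_def by blast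
    ultimately have "y \<in> S l" using y unfolding S_def by (simp only: if_P) simp
    then show "y \<in> (\<Union>l. S l)" by blast
  qed
  then have m2: "meager_in baire_top (V - A)" using meager_UN[of baire_top S] mS meager_mono by blast
  show "baire_property_in baire_top A"
    unfolding baire_property_in_def using oV meager_Un[OF m1 m2] by blast
qed

end
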